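(* Let $q = 2^\ell$ with $\ell \geq 1$, and let $\alpha,\beta \in \mathbb{F}_{q^2}$ be such that the line $\{(\alpha t+\beta, t)\}$ is not tangent to the Hermitian curve $x^q+x=y^{q+1}$. Let $\gamma = \beta+\beta^q$, let $\sigma_0,\dots,\sigma_q$ be the roots of $p(t) = t^{q+1} + \alpha^q t^q + \alpha t + \gamma$, and $P_k = \sum_{i=0}^q \sigma_i^k$. Let $\Gamma$ be the $q\times q$ matrix whose entry in row $i$ and column $j$ (indices $0 \le i,j \le q-1$) is $P_{jq+i}$. Then $$\Gamma = \begin{pmatrix} 1 & \alpha^{2^{\ell-1}} \\ \alpha^{2^{\ell-1}q} & \gamma^{2^{\ell-1}}\end{pmatrix} \otimes \begin{pmatrix} 1 & \alpha^{2^{\ell-2}} \\ \alpha^{2^{\ell-2}q} & \gamma^{2^{\ell-2}}\end{pmatrix}\otimes \cdots \otimes \begin{pmatrix} 1 & \alpha^{2} \\ \alpha^{2q} & \gamma^{2}\end{pmatrix} \otimes \begin{pmatrix} 1 & \alpha \\ \alpha^{q} & \gamma\end{pmatrix},$$ where $\otimes$ denotes the Kronecker product.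
   Context: For an $r\times s$ matrix $A=[a_{ij}]$ and an $m_1 \times m_2$ matrix $B$, the Kronecker product $A\otimes B$ is the $rm_1 \times s m_2$ block matrix whose $(i,j)$ block is $a_{ij}B$. *)

theory Defs
  imports "HOL-Computational_Algebra.Polynomial" "HOL-Library.Cardinality"
begin

text \<open>Matrices are represented as functions nat => nat => 'a together with explicit
  dimensions.\<close>

definition kron :: "(nat \<Rightarrow> nat \<Rightarrow> 'a::times) \<Rightarrow> nat \<Rightarrow> nat \<Rightarrow> (nat \<Rightarrow> nat \<Rightarrow> 'a) \<Rightarrow> nat \<Rightarrow> nat \<Rightarrow> 'a"
  where "kron A m1 m2 B = (\<lambda>i j. A (i div m1) (j div m2) * B (i mod m1) (j mod m2))"

definition herm_factor :: "nat \<Rightarrow> 'a::comm_ring_1 \<Rightarrow> 'a \<Rightarrow> nat \<Rightarrow> nat \<Rightarrow> nat \<Rightarrow> 'a"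
  where "herm_factor q a g k = (\<lambda>i j.
     if i = 0 \<and> j = 0 then 1
     else if i = 0 \<and> j = 1 then a ^ (2 ^ k)
     else if i = 1 \<and> j = 0 then a ^ (2 ^ k * q)
     else if i = 1 \<and> j = 1 then g ^ (2 ^ k)
     else 0)"

fun herm_kron :: "nat \<Rightarrow> 'a::comm_ring_1 \<Rightarrow> 'a \<Rightarrow> nat \<Rightarrow> nat \<Rightarrow> nat \<Rightarrow> 'a" where
  "herm_kron q a g 0 = (\<lambda>i j. if i = 0 \<and> j = 0 then 1 else 0)"
| "herm_kron q a g (Suc n) = kron (herm_factor q a g n) (2 ^ n) (2 ^ n) (herm_kron q a g n)"

definition herm_line_poly :: "nat \<Rightarrow> 'a::comm_ring_1 \<Rightarrow> 'a \<Rightarrow> 'a poly" where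
  "herm_line_poly q a b = [:b, a:] ^ q + [:b, a:] - monom 1 (q + 1)"

text \<open>The line {(a t + b, t)} is tangent to the Hermitian curve x^q + x = y^(q+1)
  (the curve having no point at infinity on such a line) iff it meets the curve with
  multiplicity at least 2 at some (affine) point, i.e. the restricted polynomial has a
  multiple root; this is evaluated in an extension field K (given by the field
  embedding phi) over which that polynomial splits.\<close>
definition herm_line_tangent_in :: "('a::comm_ring_1 \<Rightarrow> 'b::field) \<Rightarrow> nat \<Rightarrow> 'a \<Rightarrow> 'a \<Rightarrow> bool" where
  "herm_line_tangent_in phi q a b \<longleftrightarrow>
     (\<exists>t0. order t0 (map_poly phi (herm_line_poly q a b)) \<ge> 2)"

definition field_embedding :: "('a::field \<Rightarrow> 'b::field) \<Rightarrow> bool" where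
  "field_embedding phi \<longleftrightarrow> phi 0 = 0 \<and> phi 1 = 1 \<and>
     (\<forall>x y. phi (x + y) = phi x + phi y) \<and> (\<forall>x y. phi (x * y) = phi x * phi y)"

end

theory Submission
  imports Defs
begin


lemma frob2:
  fixes x y :: "'r::comm_ring_1"
  assumes two: "(2::'r) = 0"
  shows "(x + y) ^ (2 ^ n) = x ^ (2 ^ n) + y ^ (2 ^ n)"
proof (induction n)
  case 0 then show ?case by simp
next
  case (Suc n)
  have "(x + y) ^ (2 ^ Suc n) = ((x + y) ^ (2 ^ n))^2"
    by (simp add: power_mult[symmetric] mult.commute)
  also have "\<dots> = (x ^ (2 ^ n) + y ^ (2 ^ n))^2" using Suc by simp
  also have "\<dots> = (x ^ (2 ^ n))^2 + (y ^ (2 ^ n))^2"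
    by (simp add: power2_sum two)
  also have "\<dots> = x ^ (2 ^ Suc n) + y ^ (2 ^ Suc n)"
    by (simp add: power_mult[symmetric] mult.commute)
  finally show ?case .
qed

lemma char2_add_self:
  fixes x :: "'r::comm_ring_1"
  assumes two: "(2::'r) = 0"
  shows "x + x = 0"
proof -
  have "x + x = 2 * x" by simp
  then show ?thesis using two by simp
qed

lemma char2_minus:
  fixes x y :: "'r::comm_ring_1"
  assumes two: "(2::'r) = 0"
  shows "x - y = x + y"
proof -
  have "y + y = 0" using char2_add_self[OF two] .
  then have "- y = y" by (metis add_eq_0_iff)
  then show ?thesis by (metis diff_conv_add_uminus)
qed

lemma finite_field_char:
  "of_nat CARD('a::{field,finite}) = (0::'a)"
proof -
  have "(\<Sum>x\<in>(UNIV::'a set). x) = (\<Sum>x\<in>UNIV. x + 1)"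
    by (rule sum.reindex_bij_witness[of _ "\<lambda>x. x + 1" "\<lambda>x. x - 1"]) auto
  also have "\<dots> = (\<Sum>x\<in>(UNIV::'a set). x) + (\<Sum>x\<in>(UNIV::'a set). 1)"
    by (rule sum.distrib)
  finally have "(\<Sum>x\<in>(UNIV::'a set). (1::'a)) = 0" by simp
  then show ?thesis by simp
qed

lemma finite_field_fermat:
  fixes \<alpha> :: "'a::{field,finite}"
  shows "\<alpha> ^ CARD('a) = \<alpha>"
proof (cases "\<alpha> = 0")
  case True then show ?thesis by simp
next
  case False
  let ?S = "UNIV - {0::'a}"
  have "(\<Prod>x\<in>?S. x) = (\<Prod>x\<in>?S. \<alpha> * x)"
    apply (rule prod.reindex_bij_witness[of _ "\<lambda>x. \<alpha> * x" "\<lambda>x. x / \<alpha>"])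
        apply (simp_all only: Diff_iff UNIV_I singleton_iff)
    using False by (simp_all add: divide_eq_0_iff)
  also have "\<dots> = \<alpha> ^ card ?S * (\<Prod>x\<in>?S. x)"
    by (simp add: prod.distrib)
  finally have eq: "(\<Prod>x\<in>?S. x) = \<alpha> ^ card ?S * (\<Prod>x\<in>?S. x)" .
  have nz: "(\<Prod>x\<in>?S. x) \<noteq> 0" by simp
  have c1: "\<alpha> ^ card ?S = 1" using eq nz by simp
  have "card ?S = CARD('a) - 1" by (simp add: card_Diff_singleton)
  moreover have "CARD('a) \<ge> 1" by (simp add: Suc_leI)
  ultimately have "CARD('a) = Suc (card ?S)" by simp
  then have "\<alpha> ^ CARD('a) = \<alpha> * \<alpha> ^ card ?S" by (simp only: power_Suc)
  then show ?thesis using c1 by simp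
qed

lemma poly_frob:
  fixes p r :: "'r::comm_ring_1 poly"
  assumes two: "(2::'r) = 0"
  shows "(p + r) ^ (2 ^ n) = p ^ (2 ^ n) + r ^ (2 ^ n)"
proof -
  have "(2::'r poly) = 1 + 1" by simp
  also have "\<dots> = [:1 + 1:]" by (simp add: one_pCons)
  also have "\<dots> = 0" using two by simp
  finally show ?thesis by (rule frob2)
qed

lemma const_poly_power: "[:c:] ^ n = [:c ^ n:]"
  by (induction n) (auto simp: one_pCons mult.commute)

lemma roots_unity_sum:
  fixes u :: "nat \<Rightarrow> 'b::field"
  assumes inj: "inj_on u {..q}" and pow: "\<And>r. r \<le> q \<Longrightarrow> u r ^ (q+1) = c" and c: "c \<noteq> 0"
    and clos: "\<And>z. z ^ (q+1) = c \<Longrightarrow> z \<in> u ` {..q}"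
    and m1: "1 \<le> m" and mq: "m \<le> q"
  shows "(\<Sum>r\<le>q. u r ^ m) = 0"
proof -
  define U where "U = u ` {..q}"
  have finU: "finite U" unfolding U_def by simp
  have cardU: "card U = q + 1" unfolding U_def using inj by (simp add: card_image)
  have Upow: "\<And>v. v \<in> U \<Longrightarrow> v ^ (q+1) = c" unfolding U_def using pow by auto
  have U0: "\<And>v. v \<in> U \<Longrightarrow> v \<noteq> 0" using Upow c by fastforce
  have u0U: "u 0 \<in> U" unfolding U_def by simp
  have u0: "u 0 \<noteq> 0" using U0 u0U by blast
  define V where "V = (\<lambda>v. v / u 0) ` U"
  have injd: "inj_on (\<lambda>v. v / u 0) U" using u0 by (auto simp: inj_on_def)
  have cardV: "card V = q + 1" unfolding V_def using injd cardU by (simp add: card_image)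
  have "\<exists>\<zeta>\<in>V. \<zeta> ^ m \<noteq> 1"
  proof (rule ccontr)
    assume "\<not> ?thesis"
    then have all: "\<And>z. z \<in> V \<Longrightarrow> z ^ m = 1" by blast
    define p :: "'b poly" where "p = monom 1 m - 1"
    have cm: "coeff p m = 1" unfolding p_def using m1 by (simp add: coeff_monom)
    then have p0: "p \<noteq> 0" by auto
    have "degree p \<le> m" unfolding p_def
      by (metis degree_diff_le degree_monom_le degree_1 le0)
    have "V \<subseteq> {z. poly p z = 0}" using all unfolding p_def by (auto simp: poly_monom)
    then have "card V \<le> card {z. poly p z = 0}"
      by (rule card_mono[OF poly_roots_finite[OF p0]])
    also have "\<dots> \<le> degree p" by (rule card_poly_roots_bound[OF p0])
    finally show False using cardV \<open>degree p \<le> m\<close> mq by simp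
  qed
  then obtain \<zeta> where z1: "\<zeta> \<in> V" and z2: "\<zeta> ^ m \<noteq> 1" by blast
  from z1 obtain w where w: "w \<in> U" and zw: "\<zeta> = w / u 0" unfolding V_def by blast
  have zq: "\<zeta> ^ (q+1) = 1" using zw Upow[OF w] Upow[OF u0U] c by (simp add: power_divide)
  then have zn: "\<zeta> \<noteq> 0" by (metis one_neq_zero zero_power add_gr_0 less_one)
  have sub: "(\<lambda>v. \<zeta> * v) ` U \<subseteq> U"
  proof
    fix y assume "y \<in> (\<lambda>v. \<zeta> * v) ` U"
    then obtain v where v: "v \<in> U" "y = \<zeta> * v" by blast
    have "y ^ (q+1) = \<zeta> ^ (q+1) * v ^ (q+1)" using v by (simp only: power_mult_distrib)
    then have "y ^ (q+1) = c" using zq Upow[OF v(1)] by simp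
    then show "y \<in> U" unfolding U_def by (rule clos)
  qed
  have injz: "inj_on (\<lambda>v. \<zeta> * v) U" using zn by (auto simp: inj_on_def)
  have img: "(\<lambda>v. \<zeta> * v) ` U = U"
    by (rule card_subset_eq[OF finU sub]) (simp add: card_image[OF injz])
  have S: "(\<Sum>r\<le>q. u r ^ m) = (\<Sum>v\<in>U. v ^ m)"
    unfolding U_def by (simp add: sum.reindex[OF inj])
  have "(\<Sum>v\<in>U. v ^ m) = (\<Sum>v\<in>(\<lambda>v. \<zeta> * v) ` U. v ^ m)" using img by simp
  also have "\<dots> = (\<Sum>v\<in>U. (\<zeta> * v) ^ m)" by (simp add: sum.reindex[OF injz])
  also have "\<dots> = \<zeta> ^ m * (\<Sum>v\<in>U. v ^ m)" by (simp add: power_mult_distrib sum_distrib_left)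
  finally have "(1 - \<zeta> ^ m) * (\<Sum>v\<in>U. v ^ m) = 0" by (simp add: algebra_simps)
  then show ?thesis using S z2 by simp
qed

lemma vanish:
  fixes u :: "nat \<Rightarrow> 'b::field"
  assumes pow: "\<And>r. r \<le> q \<Longrightarrow> u r ^ (q+1) = c"
    and core: "\<And>m. 1 \<le> m \<Longrightarrow> m \<le> q \<Longrightarrow> (\<Sum>r\<le>q. u r ^ m) = 0"
    and st: "s < q" "t < q" "s \<noteq> t"
  shows "(\<Sum>r\<le>q. u r ^ (s + q * t)) = 0"
proof (cases "t < s")
  case True
  have e: "s + q * t = (s - t) + (q + 1) * t" using True by (simp add: algebra_simps)
  have "(\<Sum>r\<le>q. u r ^ (s + q * t)) = (\<Sum>r\<le>q. u r ^ (s - t) * c ^ t)"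
  proof (rule sum.cong)
    fix r assume "r \<in> {..q}"
    then have "u r ^ (q+1) = c" using pow by simp
    then show "u r ^ (s + q * t) = u r ^ (s - t) * c ^ t"
      unfolding e by (simp only: power_add power_mult)
  qed simp
  also have "\<dots> = (\<Sum>r\<le>q. u r ^ (s - t)) * c ^ t" by (simp add: sum_distrib_right)
  also have "\<dots> = 0" using core[of "s - t"] True st by simp
  finally show ?thesis .
next
  case False
  then have lt: "s < t" using st by simp
  then obtain d where d: "t = s + d + 1" by (metis add.commute less_imp_Suc_add plus_1_eq_Suc add.assoc)
  have e: "s + q * t = (q - d) + (q + 1) * (s + d)"
    using d st by (simp add: algebra_simps)
  have "(\<Sum>r\<le>q. u r ^ (s + q * t)) = (\<Sum>r\<le>q. u r ^ (q - d) * c ^ (s + d))"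
  proof (rule sum.cong)
    fix r assume "r \<in> {..q}"
    then have "u r ^ (q+1) = c" using pow by simp
    then show "u r ^ (s + q * t) = u r ^ (q - d) * c ^ (s + d)"
      unfolding e by (simp only: power_add power_mult)
  qed simp
  also have "\<dots> = (\<Sum>r\<le>q. u r ^ (q - d)) * c ^ (s + d)" by (simp add: sum_distrib_right)
  also have "\<dots> = 0" using core[of "q - d"] d st by simp
  finally show ?thesis .
qed

lemma dvd_lt_add:
  fixes d s Q :: nat
  assumes "d dvd s" "d dvd Q" "s < Q"
  shows "s + d \<le> Q"
proof -
  obtain k where k: "s = d * k" using assms(1) by (auto elim: dvdE)
  obtain k' where k': "Q = d * k'" using assms(2) by (auto elim: dvdE)
  have "k < k'" using assms(3) k k' by (simp add: mult_less_cancel1)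
  then have "d * Suc k \<le> d * k'" by (intro mult_le_mono2) simp
  then show ?thesis using k k' by simp
qed

lemma factor_expand:
  fixes v w a g :: "'b::field"
  assumes two: "(2::'b) = 0"
    and xy: "(v + a ^ q) * (w + a) = g + a * v + a ^ q * w"
    and i1: "i1 \<le> 1" and j1: "j1 \<le> 1"
  shows "((v + a ^ q) ^ (2 ^ n)) ^ i1 * ((w + a) ^ (2 ^ n)) ^ j1 =
    herm_factor q a g n i1 j1
    + (if i1 = 1 then (if j1 = 1 then a ^ (2 ^ n) else 1) else 0) * v ^ (2 ^ n)
    + (if j1 = 1 then (if i1 = 1 then a ^ (2 ^ n * q) else 1) else 0) * w ^ (2 ^ n)"
proof -
  have aq: "(a ^ q) ^ (2 ^ n) = a ^ (2 ^ n * q)" by (simp add: power_mult[symmetric] mult.commute)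
  consider "i1 = 0" "j1 = 0" | "i1 = 0" "j1 = 1" | "i1 = 1" "j1 = 0" | "i1 = 1" "j1 = 1"
    using i1 j1 by linarith
  then show ?thesis
  proof cases
    case 1 then show ?thesis by (simp add: herm_factor_def)
  next
    case 2 then show ?thesis by (simp add: herm_factor_def frob2[OF two] add.commute)
  next
    case 3 then show ?thesis by (simp add: herm_factor_def frob2[OF two] add.commute aq)
  next
    case 4
    have "((v + a ^ q) ^ (2 ^ n)) * ((w + a) ^ (2 ^ n)) = (g + a * v + a ^ q * w) ^ (2 ^ n)"
      by (simp add: power_mult_distrib[symmetric] xy)
    also have "\<dots> = g ^ (2 ^ n) + a ^ (2 ^ n) * v ^ (2 ^ n) + a ^ (2 ^ n * q) * w ^ (2 ^ n)"
      by (simp add: frob2[OF two] power_mult_distrib aq)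
    finally show ?thesis using 4 by (simp add: herm_factor_def)
  qed
qed



lemma main_ind:
  fixes u :: "nat \<Rightarrow> 'b::field" and a g :: 'b
  assumes two: "(2::'b) = 0"
    and xy: "\<And>r. r \<le> q \<Longrightarrow> (u r + a ^ q) * (u r ^ q + a) = g + a * u r + a ^ q * u r ^ q"
    and van: "\<And>s t. s < q \<Longrightarrow> t < q \<Longrightarrow> s \<noteq> t \<Longrightarrow> (\<Sum>r\<le>q. u r ^ (s + q * t)) = 0"
    and one: "of_nat (q + 1) = (1::'b)"
    and q: "q = 2 ^ l"
  shows "n \<le> l \<Longrightarrow> i < 2 ^ n \<Longrightarrow> j < 2 ^ n \<Longrightarrow> s < q \<Longrightarrow> t < q \<Longrightarrow>
    2 ^ n dvd s \<Longrightarrow> 2 ^ n dvd t \<Longrightarrow> (s = t \<Longrightarrow> s = 0) \<Longrightarrow>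
    (\<Sum>r\<le>q. u r ^ (s + q * t) * ((u r + a ^ q) ^ i * (u r ^ q + a) ^ j))
      = (if s = 0 \<and> t = 0 then herm_kron q a g n i j else 0)"
proof (induction n arbitrary: i j s t)
  case 0
  then have ij: "i = 0" "j = 0" by auto
  show ?case
  proof (cases "s = 0 \<and> t = 0")
    case True
    then show ?thesis using ij one by simp
  next
    case False
    then have "s \<noteq> t" using 0 by auto
    then show ?thesis using van[of s t] 0 False ij by simp
  qed
next
  case (Suc n)
  define N :: nat where "N = 2 ^ n"
  have N2: "2 ^ Suc n = 2 * N" unfolding N_def by simp
  define i1 i0 j1 j0 where "i1 = i div N" "i0 = i mod N" "j1 = j div N" "j0 = j mod N"
  have Npos: "N > 0" unfolding N_def by simp
  have "i div N < 2" by (rule less_mult_imp_div_less) (use Suc.prems(2) N2 in simp)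
  then have i1: "i1 \<le> 1" unfolding i1_i0_j1_j0_def by simp
  have "j div N < 2" by (rule less_mult_imp_div_less) (use Suc.prems(3) N2 in simp)
  then have j1: "j1 \<le> 1" unfolding i1_i0_j1_j0_def by simp
  have i0: "i0 < N" "j0 < N" unfolding i1_i0_j1_j0_def using Npos by simp_all
  have ie: "i = N * i1 + i0" "j = N * j1 + j0" unfolding i1_i0_j1_j0_def by simp_all
  define e :: 'b where "e = (if i1 = 1 then (if j1 = 1 then a ^ (2 ^ n) else 1) else 0)"
  define f :: 'b where "f = (if j1 = 1 then (if i1 = 1 then a ^ (2 ^ n * q) else 1) else 0)"
  define M where "M = herm_factor q a g n i1 j1"
  define F where "F = (\<lambda>s t. (\<Sum>r\<le>q. u r ^ (s + q * t) * ((u r + a ^ q) ^ i0 * (u r ^ q + a) ^ j0)))"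
  have dN: "N dvd s" "N dvd t" using Suc.prems(6,7) N2 by (auto intro: dvd_mult_left)
  have "(\<Sum>r\<le>q. u r ^ (s + q * t) * ((u r + a ^ q) ^ i * (u r ^ q + a) ^ j))
      = (\<Sum>r\<le>q. M * (u r ^ (s + q * t) * ((u r + a ^ q) ^ i0 * (u r ^ q + a) ^ j0))
         + e * (u r ^ ((s + N) + q * t) * ((u r + a ^ q) ^ i0 * (u r ^ q + a) ^ j0))
         + f * (u r ^ (s + q * (t + N)) * ((u r + a ^ q) ^ i0 * (u r ^ q + a) ^ j0)))"
  proof (rule sum.cong)
    fix r assume r: "r \<in> {..q}"
    let ?v = "u r" and ?X = "(u r + a ^ q) ^ i0 * (u r ^ q + a) ^ j0"
    have fe: "((?v + a ^ q) ^ N) ^ i1 * ((?v ^ q + a) ^ N) ^ j1 = M + e * ?v ^ N + f * (?v ^ q) ^ N"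
      unfolding M_def e_def f_def N_def
      by (rule factor_expand[OF two xy i1 j1]) (use r in simp)
    have "(u r + a ^ q) ^ i * (u r ^ q + a) ^ j
        = (((?v + a ^ q) ^ N) ^ i1 * ((?v ^ q + a) ^ N) ^ j1) * ?X"
      unfolding ie by (simp add: power_add power_mult mult_ac)
    also have "\<dots> = (M + e * ?v ^ N + f * (?v ^ q) ^ N) * ?X" by (simp only: fe)
    finally have h: "(u r + a ^ q) ^ i * (u r ^ q + a) ^ j = (M + e * ?v ^ N + f * (?v ^ q) ^ N) * ?X" .
    have p1: "?v ^ ((s + N) + q * t) = ?v ^ (s + q * t) * ?v ^ N" by (simp add: power_add mult_ac)
    have p2: "?v ^ (s + q * (t + N)) = ?v ^ (s + q * t) * (?v ^ q) ^ N"
    proof -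
      have "s + q * (t + N) = (s + q * t) + q * N" by (simp add: algebra_simps)
      then show ?thesis by (simp only: power_add power_mult)
    qed
    show "u r ^ (s + q * t) * ((u r + a ^ q) ^ i * (u r ^ q + a) ^ j)
      = M * (u r ^ (s + q * t) * ?X) + e * (u r ^ ((s + N) + q * t) * ?X)
         + f * (u r ^ (s + q * (t + N)) * ?X)"
      unfolding h p1 p2 by (simp add: algebra_simps)
  qed simp
  also have "\<dots> = M * F s t + e * F (s + N) t + f * F s (t + N)"
    unfolding F_def by (simp add: sum.distrib sum_distrib_left)
  also have "F s t = (if s = 0 \<and> t = 0 then herm_kron q a g n i0 j0 else 0)"
    unfolding F_def N_def
    by (rule Suc.IH) (use Suc.prems i0 dN in \<open>simp_all add: N_def\<close>)
  also have "F (s + N) t = 0"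
  proof -
    have dq: "2 * N dvd q" using Suc.prems(1) q N2 by (metis le_imp_power_dvd)
    have lt: "s + N < q" using dvd_lt_add[OF Suc.prems(6)[unfolded N2] dq Suc.prems(4)] Npos by simp
    have ne: "s + N \<noteq> t"
    proof
      assume "s + N = t"
      then have "2 * N dvd s + N" using Suc.prems(7) N2 by simp
      then have "2 * N dvd N" using Suc.prems(6) N2 by (simp add: dvd_add_right_iff)
      then have "2 * N \<le> N" using Npos by (rule dvd_imp_le)
      then show False using Npos by simp
    qed
    have "F (s + N) t = (if s + N = 0 \<and> t = 0 then herm_kron q a g n i0 j0 else 0)"
      unfolding F_def N_def
      by (rule Suc.IH) (use Suc.prems i0 dN lt ne in \<open>simp_all add: N_def\<close>)
    then show ?thesis using Npos by simp
  qed
  also have "F s (t + N) = 0"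
  proof -
    have dq: "2 * N dvd q" using Suc.prems(1) q N2 by (metis le_imp_power_dvd)
    have lt: "t + N < q" using dvd_lt_add[OF Suc.prems(7)[unfolded N2] dq Suc.prems(5)] Npos by simp
    have ne: "s \<noteq> t + N"
    proof
      assume "s = t + N"
      then have "2 * N dvd t + N" using Suc.prems(6) N2 by simp
      then have "2 * N dvd N" using Suc.prems(7) N2 by (simp add: dvd_add_right_iff)
      then have "2 * N \<le> N" using Npos by (rule dvd_imp_le)
      then show False using Npos by simp
    qed
    have "F s (t + N) = (if s = 0 \<and> t + N = 0 then herm_kron q a g n i0 j0 else 0)"
      unfolding F_def N_def
      by (rule Suc.IH) (use Suc.prems i0 dN lt ne in \<open>simp_all add: N_def\<close>)
    then show ?thesis using Npos by simp
  qed
  finally have fin: "(\<Sum>r\<le>q. u r ^ (s + q * t) * ((u r + a ^ q) ^ i * (u r ^ q + a) ^ j))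
      = M * (if s = 0 \<and> t = 0 then herm_kron q a g n i0 j0 else 0)" by simp
  have hk: "herm_kron q a g (Suc n) i j = M * herm_kron q a g n i0 j0"
    unfolding M_def i1_i0_j1_j0_def N_def by (simp only: herm_kron.simps kron_def)
  show ?case unfolding fin hk by simp
qed



lemma emb_props:
  assumes "field_embedding phi"
  shows "phi 0 = 0" "phi 1 = 1" "\<And>x y. phi (x + y) = phi x + phi y" "\<And>x y. phi (x * y) = phi x * phi y"
  using assms unfolding field_embedding_def by auto

lemma emb_pow:
  assumes "field_embedding phi"
  shows "phi (x ^ n) = phi x ^ n"
  using emb_props[OF assms] by (induction n) auto

lemma emb_if0:
  assumes "field_embedding phi"
  shows "phi (if b then x else 0) = (if b then phi x else 0)"
  using emb_props[OF assms] by auto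

lemma emb_kron:
  assumes emb: "field_embedding phi"
  shows "phi (herm_kron q \<alpha> \<gamma> n i j) = herm_kron q (phi \<alpha>) (phi \<gamma>) n i j"
proof (induction n arbitrary: i j)
  case 0 then show ?case using emb_props[OF emb] by simp
next
  case (Suc n)
  have hf: "phi (herm_factor q \<alpha> \<gamma> n i' j') = herm_factor q (phi \<alpha>) (phi \<gamma>) n i' j'" for i' j'
    unfolding herm_factor_def using emb_props[OF emb] emb_pow[OF emb] by auto
  show ?case unfolding herm_kron.simps kron_def emb_props(4)[OF emb] hf Suc.IH ..
qed

lemma poly_two: "(2::'r::comm_ring_1 poly) = [:2:]"
proof -
  have "(2::'r poly) = 1 + 1" by simp
  also have "\<dots> = [:1 + 1:]" by (simp add: one_pCons)
  finally show ?thesis by simp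
qed

lemma herm_poly_eq:
  fixes \<alpha> \<beta> :: "'a::field"
  assumes two: "(2::'a) = 0" and q: "q = 2 ^ l"
  shows "herm_line_poly q \<alpha> \<beta> = monom 1 (q + 1) + monom (\<alpha> ^ q) q + monom \<alpha> 1 + [:\<beta> + \<beta> ^ q:]"
proof -
  have two': "(2::'a poly) = 0" using two by (simp add: poly_two)
  have l1: "[:\<beta>, \<alpha>:] = [:\<beta>:] + monom \<alpha> 1" by (simp add: monom_Suc monom_0)
  have "[:\<beta>, \<alpha>:] ^ q = [:\<beta>:] ^ q + monom \<alpha> 1 ^ q"
    unfolding l1 q by (rule poly_frob[OF two])
  also have "\<dots> = [:\<beta> ^ q:] + monom (\<alpha> ^ q) q" by (simp add: const_poly_power monom_power)
  finally have l2: "[:\<beta>, \<alpha>:] ^ q = [:\<beta> ^ q:] + monom (\<alpha> ^ q) q" .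
  have l3: "[:\<beta> + \<beta> ^ q:] = [:\<beta>:] + [:\<beta> ^ q:]" by simp
  show ?thesis unfolding herm_line_poly_def char2_minus[OF two'] l2 l3
    by (subst l1) (simp add: add_ac)
qed



theorem mainTheorem6:
  fixes l q :: nat
    and \<alpha> \<beta> :: "'a::{field, finite}"
    and phi :: "'a \<Rightarrow> 'b::field"
    and \<sigma> :: "nat \<Rightarrow> 'b"
  assumes l: "l \<ge> 1"
    and q: "q = 2 ^ l"
    and card: "CARD('a) = q ^ 2"
    and emb: "field_embedding phi"
    and roots: "map_poly phi (monom 1 (q + 1) + monom (\<alpha> ^ q) q + monom \<alpha> 1 + [:\<beta> + \<beta> ^ q:])
                = (\<Prod>i\<le>q. [:- \<sigma> i, 1:])"
    and not_tangent: "\<not> herm_line_tangent_in phi q \<alpha> \<beta>"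
  shows "\<forall>i<q. \<forall>j<q.
           (\<Sum>r\<le>q. \<sigma> r ^ (j * q + i)) = phi (herm_kron q \<alpha> (\<beta> + \<beta> ^ q) l i j)"
proof -
  note E = emb_props[OF emb]
  note Epow = emb_pow[OF emb]
  
  have "(2::'a) ^ (2 * l) = 0"
    using finite_field_char[where 'a='a] card q by (simp add: power_mult)
  then have two_a: "(2::'a) = 0" by simp
  have ferm: "\<alpha> ^ (q * q) = \<alpha>" using finite_field_fermat[of \<alpha>] card by (simp add: power2_eq_square)
  have "phi 2 = phi 1 + phi 1" using E(3)[of 1 1] by simp
  then have two: "(2::'b) = 0" using two_a E by simp
  define a where "a = phi \<alpha>"
  define g where "g = phi (\<beta> + \<beta> ^ q)"
  define c where "c = g + a ^ (q + 1)"
  have aqq: "a ^ (q * q) = a" unfolding a_def using ferm Epow by metis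
  define Q :: "'b poly" where "Q = monom 1 (q + 1) + monom (a ^ q) q + monom a 1 + [:g:]"
  have mapQ: "map_poly phi (monom 1 (q + 1) + monom (\<alpha> ^ q) q + monom \<alpha> 1 + [:\<beta> + \<beta> ^ q:]) = Q"
  proof (rule poly_eqI)
    fix n
    show "coeff (map_poly phi (monom 1 (q + 1) + monom (\<alpha> ^ q) q + monom \<alpha> 1 + [:\<beta> + \<beta> ^ q:])) n = coeff Q n"
      unfolding Q_def a_def g_def
      by (simp add: coeff_map_poly E(1) coeff_monom coeff_pCons E(3) emb_if0[OF emb] Epow E(2)
          split: nat.split)
  qed
  have prodQ: "(\<Prod>i\<le>q. [:- \<sigma> i, 1:]) = Q" using roots mapQ by simp
  have polyQ: "poly Q t = t ^ (q + 1) + a ^ q * t ^ q + a * t + g" for t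
    unfolding Q_def by (simp add: poly_monom)
  have frq: "(x + y) ^ q = x ^ q + y ^ q" for x y :: 'b unfolding q by (rule frob2[OF two])
  have key: "poly Q t = (t + a ^ q) ^ (q + 1) + c" for t
  proof -
    have "(t + a ^ q) ^ (q + 1) = (t + a ^ q) * (t ^ q + a)"
      by (simp add: frq power_mult[symmetric] aqq)
    also have "\<dots> = t ^ (q + 1) + a ^ q * t ^ q + a * t + a ^ (q + 1)"
      by (simp add: algebra_simps)
    finally show ?thesis unfolding polyQ c_def
      using char2_add_self[OF two, of "a ^ (q + 1)"] by (simp add: algebra_simps)
  qed
  have rootQ: "poly Q z = 0 \<longleftrightarrow> (\<exists>i\<le>q. z = \<sigma> i)" for z
    unfolding prodQ[symmetric] poly_prod by (auto simp: prod_zero_iff)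
  define u where "u r = \<sigma> r + a ^ q" for r
  have minus_b: "x = - y \<longleftrightarrow> x = y" for x y :: 'b
  proof -
    have "- y = y" using char2_add_self[OF two, of y] by (metis add_eq_0_iff)
    then show ?thesis by (simp only:)
  qed
  have pow: "u r ^ (q + 1) = c" if "r \<le> q" for r
  proof -
    have "poly Q (\<sigma> r) = 0" using rootQ that by blast
    then have "u r ^ (q + 1) = - c" unfolding key u_def by (simp add: eq_neg_iff_add_eq_0)
    then show ?thesis using minus_b by blast
  qed
  
  have hermP: "herm_line_poly q \<alpha> \<beta> = monom 1 (q + 1) + monom (\<alpha> ^ q) q + monom \<alpha> 1 + [:\<beta> + \<beta> ^ q:]"
    by (rule herm_poly_eq[OF two_a q])
  have ord: "order t0 (\<Prod>i\<le>q. [:- \<sigma> i, 1:]) < 2" for t0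
    using not_tangent unfolding herm_line_tangent_in_def hermP roots by (simp add: not_le)
  have P0: "(\<Prod>i\<le>q. [:- \<sigma> i, 1:]) \<noteq> 0" by (simp add: prod_zero_iff)
  have injs: "inj_on \<sigma> {..q}"
  proof (rule inj_onI, rule ccontr)
    fix r s assume r: "r \<in> {..q}" and s: "s \<in> {..q}" and eq: "\<sigma> r = \<sigma> s" and ne: "r \<noteq> s"
    have "(\<Prod>i\<le>q. [:- \<sigma> i, 1:]) = [:- \<sigma> r, 1:] * (\<Prod>i\<in>{..q} - {r}. [:- \<sigma> i, 1:])"
      using r by (simp add: prod.remove)
    also have "(\<Prod>i\<in>{..q} - {r}. [:- \<sigma> i, 1:]) = [:- \<sigma> s, 1:] * (\<Prod>i\<in>{..q} - {r} - {s}. [:- \<sigma> i, 1:])"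
      using s ne by (subst prod.remove[of _ s]) auto
    finally have "(\<Prod>i\<le>q. [:- \<sigma> i, 1:]) = [:- \<sigma> r, 1:] ^ 2 * (\<Prod>i\<in>{..q} - {r} - {s}. [:- \<sigma> i, 1:])"
      unfolding eq by (simp only: power2_eq_square mult.assoc)
    then have dv: "[:- \<sigma> r, 1:] ^ 2 dvd (\<Prod>i\<le>q. [:- \<sigma> i, 1:])" by (metis dvd_triv_left)
    have "Suc (order (\<sigma> r) (\<Prod>i\<le>q. [:- \<sigma> i, 1:])) \<le> 2" using ord[of "\<sigma> r"] by simp
    then have "[:- \<sigma> r, 1:] ^ Suc (order (\<sigma> r) (\<Prod>i\<le>q. [:- \<sigma> i, 1:])) dvd [:- \<sigma> r, 1:] ^ 2"
      by (rule le_imp_power_dvd)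
    then have "[:- \<sigma> r, 1:] ^ Suc (order (\<sigma> r) (\<Prod>i\<le>q. [:- \<sigma> i, 1:])) dvd (\<Prod>i\<le>q. [:- \<sigma> i, 1:])"
      using dv dvd_trans by blast
    then show False using order_2[OF P0] by blast
  qed
  have inju: "inj_on u {..q}" using injs unfolding u_def by (auto simp: inj_on_def)
  have q2: "q \<ge> 2" using l q by (metis one_le_numeral power_increasing power_one_right)
  have c0: "c \<noteq> 0"
  proof
    assume "c = 0"
    then have "u 0 = 0" "u 1 = 0" using pow[of 0] pow[of 1] q2 by auto
    then have "u 0 = u 1" by simp
    then have "(0::nat) = 1" by (rule inj_onD[OF inju]) (use q2 in auto)
    then show False by simp
  qed
  have clos: "z \<in> u ` {..q}" if "z ^ (q + 1) = c" for z
  proof -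
    have zz: "(z + a ^ q + a ^ q) = z" using char2_add_self[OF two, of "a ^ q"] by (simp add: add.assoc)
    have "poly Q (z + a ^ q) = (z + a ^ q + a ^ q) ^ (q + 1) + c" by (rule key)
    also have "\<dots> = c + c" unfolding zz that ..
    finally have "poly Q (z + a ^ q) = 0" using char2_add_self[OF two] by simp
    then obtain i where i: "i \<le> q" "z + a ^ q = \<sigma> i" using rootQ by blast
    have "u i = z + a ^ q + a ^ q" unfolding u_def using i by simp
    also have "\<dots> = z" by (rule zz)
    finally show ?thesis using i by force
  qed
  have core: "(\<Sum>r\<le>q. u r ^ m) = 0" if "1 \<le> m" "m \<le> q" for m
    by (rule roots_unity_sum[OF inju pow c0 clos that]) auto
  have van: "(\<Sum>r\<le>q. u r ^ (s + q * t)) = 0" if "s < q" "t < q" "s \<noteq> t" for s t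
    by (rule vanish[OF pow core that]) auto
  have xy: "(u r + a ^ q) * (u r ^ q + a) = g + a * u r + a ^ q * u r ^ q" if "r \<le> q" for r
  proof -
    have "(u r + a ^ q) * (u r ^ q + a) = u r ^ (q + 1) + a * u r + a ^ q * u r ^ q + a ^ (q + 1)"
      by (simp add: algebra_simps)
    also have "\<dots> = g + a * u r + a ^ q * u r ^ q + (a ^ (q + 1) + a ^ (q + 1))"
      unfolding pow[OF that] c_def by (simp add: algebra_simps)
    finally show ?thesis using char2_add_self[OF two, of "a ^ (q + 1)"] by simp
  qed
  have one: "of_nat (q + 1) = (1::'b)"
  proof -
    have "q = 2 * 2 ^ (l - 1)" using q l by (metis Suc_diff_le diff_Suc_1 power_Suc)
    then have "of_nat q = (2::'b) * 2 ^ (l - 1)" by simp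
    then show ?thesis using two by simp
  qed
  show ?thesis
  proof (intro allI impI)
    fix i j assume i: "i < q" and j: "j < q"
    have M: "(\<Sum>r\<le>q. u r ^ (0 + q * 0) * ((u r + a ^ q) ^ i * (u r ^ q + a) ^ j))
      = (if (0::nat) = 0 \<and> (0::nat) = 0 then herm_kron q a g l i j else 0)"
      by (rule main_ind[OF two xy van one q]) (use i j q in auto)
    have s1: "u r + a ^ q = \<sigma> r" for r
      unfolding u_def using char2_add_self[OF two, of "a ^ q"] by (simp add: add.assoc)
    have s2: "u r ^ q + a = \<sigma> r ^ q" for r
    proof -
      have "u r ^ q = \<sigma> r ^ q + a" unfolding u_def frq by (simp add: power_mult[symmetric] aqq)
      then show ?thesis using char2_add_self[OF two, of a] by (simp add: add.assoc)
    qed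
    have "(\<Sum>r\<le>q. \<sigma> r ^ (j * q + i)) = (\<Sum>r\<le>q. u r ^ (0 + q * 0) * ((u r + a ^ q) ^ i * (u r ^ q + a) ^ j))"
      unfolding s1 s2 by (simp add: power_add power_mult[symmetric] mult.commute)
    also have "\<dots> = herm_kron q a g l i j" using M by simp
    also have "\<dots> = phi (herm_kron q \<alpha> (\<beta> + \<beta> ^ q) l i j)"
      unfolding a_def g_def by (rule emb_kron[OF emb, symmetric])
    finally show "(\<Sum>r\<le>q. \<sigma> r ^ (j * q + i)) = phi (herm_kron q \<alpha> (\<beta> + \<beta> ^ q) l i j)" .
  qed
qed

end
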